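(* Let $A\subseteq\mathbb{N}$ and $x\in\mathbb{R}$. There exists a density measure $\mu$ such that $\mu(A)=x$ if and only if $x\in[\underline{\underline{d}}(A),\overline{\overline{d}}(A)]$.
   Context: $\mathbb{N}=\{1,2,3,\dots\}$. For $A\subseteq\mathbb{N}$ let $A(n)=|A\cap[1,n]|$. Let $\mathcal{D}$ be the collection of all $A\subseteq\mathbb{N}$ for which the asymptotic density $d(A)=\lim_{n\to\infty}\frac{A(n)}{n}$ exists. A density measure is a function $\mu:\mathcal{P}(\mathbb{N})\to[0,1]$ with $\mu(\mathbb{N})=1$, $\mu(A\cup B)=\mu(A)+\mu(B)$ for all disjoint $A,B\subseteq\mathbb{N}$, and $\mu(A)=d(A)$ for all $A\in\mathcal{D}$. Define $\underline{\underline{d}}(A)=\sup\{d(B);\ B\subseteq A,\ B\in\mathcal{D}\}$ and $\overline{\overline{d}}(A)=\inf\{d(C);\ C\supseteq A,\ C\in\mathcal{D}\}$. *)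

theory Defs
  imports Complex_Main
begin

definition Npos :: "nat set" where
  "Npos = {n. 1 \<le> n}"

definition cnt :: "nat set \<Rightarrow> nat \<Rightarrow> nat" where
  "cnt A n = card (A \<inter> {1..n})"

definition has_density :: "nat set \<Rightarrow> real \<Rightarrow> bool" where
  "has_density A d \<longleftrightarrow> ((\<lambda>n. real (cnt A n) / real n) \<longlongrightarrow> d) sequentially"

definition DD :: "nat set set" where
  "DD = {A. A \<subseteq> Npos \<and> (\<exists>d. has_density A d)}"

definition dens :: "nat set \<Rightarrow> real" where
  "dens A = lim (\<lambda>n. real (cnt A n) / real n)"

text \<open>Density measure: a function on P(N) (values outside P(N) irrelevant).\<close>
definition density_measure :: "(nat set \<Rightarrow> real) \<Rightarrow> bool" where
  "density_measure \<mu> \<longleftrightarrow>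
     (\<forall>A. A \<subseteq> Npos \<longrightarrow> 0 \<le> \<mu> A \<and> \<mu> A \<le> 1) \<and>
     \<mu> Npos = 1 \<and>
     (\<forall>A B. A \<subseteq> Npos \<longrightarrow> B \<subseteq> Npos \<longrightarrow> A \<inter> B = {} \<longrightarrow> \<mu> (A \<union> B) = \<mu> A + \<mu> B) \<and>
     (\<forall>A\<in>DD. \<mu> A = dens A)"

definition lower_dd :: "nat set \<Rightarrow> real" where
  "lower_dd A = Sup {dens B | B. B \<subseteq> A \<and> B \<in> DD}"

definition upper_dd :: "nat set \<Rightarrow> real" where
  "upper_dd A = Inf {dens C | C. A \<subseteq> C \<and> C \<in> DD}"

end

theory Submission
  imports Defs "HOL-Analysis.Analysis"
begin


lemma compact_K: "compact {f :: 'a \<Rightarrow> real. \<forall>B. f B \<in> {0..1}}"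
proof -
  have "compactin (product_topology (\<lambda>_. euclidean) UNIV) (PiE UNIV (\<lambda>_::'a. {0..1::real}))"
    by (simp add: compactin_PiE)
  moreover have "PiE UNIV (\<lambda>_::'a. {0..1::real}) = {f. \<forall>B. f B \<in> {0..1}}"
    by (auto simp: PiE_def Pi_def)
  ultimately show ?thesis
    by (simp add: euclidean_product_topology)
qed

lemma cluster_exists:
  fixes x :: "nat \<Rightarrow> 'a \<Rightarrow> real"
  assumes "\<And>i B. x i B \<in> {0..1}"
  shows "\<exists>z. inf (nhds z) (filtermap x sequentially) \<noteq> bot"
proof -
  have "filtermap x sequentially \<noteq> bot" by (simp add: filtermap_bot_iff)
  moreover have "eventually (\<lambda>f. f \<in> {f. \<forall>B. f B \<in> {0..1}}) (filtermap x sequentially)"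
    using assms by (simp add: eventually_filtermap)
  ultimately show ?thesis using compact_K[unfolded compact_filter] by blast
qed

lemma cluster_closed:
  fixes x :: "nat \<Rightarrow> 'a \<Rightarrow> real" and g :: "('a \<Rightarrow> real) \<Rightarrow> real"
  assumes z: "inf (nhds z) (filtermap x sequentially) \<noteq> bot"
    and g: "continuous_on UNIV g" and S: "closed S"
    and ev: "eventually (\<lambda>i. g (x i) \<in> S) sequentially"
  shows "g z \<in> S"
proof (rule ccontr)
  assume "g z \<notin> S"
  then have "eventually (\<lambda>y. y \<in> - S) (nhds (g z))"
    using S by (intro eventually_nhds_in_open) auto
  moreover have "(g \<longlongrightarrow> g z) (nhds z)"
    using g by (metis UNIV_I continuous_on_def open_UNIV at_within_open tendsto_at_iff_tendsto_nhds)
  ultimately have 1: "eventually (\<lambda>f. g f \<in> - S) (nhds z)"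
    by (rule filterlim_iff[THEN iffD1, rule_format, rotated])
  have 2: "eventually (\<lambda>f. g f \<in> S) (filtermap x sequentially)"
    using ev by (simp add: eventually_filtermap)
  have "eventually (\<lambda>f. False) (inf (nhds z) (filtermap x sequentially))"
    using eventually_inf[THEN iffD2, OF exI[of _ "\<lambda>f. g f \<in> - S"], OF exI[of _ "\<lambda>f. g f \<in> S"]] 1 2 by auto
  then show False using z by (simp add: eventually_False)
qed



lemma cnt_0[simp]: "cnt B 0 = 0" by (simp add: cnt_def)

lemma cnt_Suc: "cnt B (Suc n) = cnt B n + (if Suc n \<in> B then 1 else 0)"
proof -
  have "B \<inter> {1..Suc n} = (if Suc n \<in> B then insert (Suc n) (B \<inter> {1..n}) else B \<inter> {1..n})"
    by (auto simp: le_Suc_eq)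
  then show ?thesis by (simp add: cnt_def)
qed

lemma cnt_le_add: "k \<le> m \<Longrightarrow> cnt B k \<le> cnt B m \<and> cnt B m + k \<le> cnt B k + m"
proof (induction m)
  case 0 then show ?case by simp
next
  case (Suc m)
  show ?case
  proof (cases "k = Suc m")
    case False
    with Suc have "k \<le> m" by simp
    with Suc.IH show ?thesis by (auto simp: cnt_Suc)
  qed simp
qed

lemma cnt_le: "cnt B n \<le> n"
  using cnt_le_add[of 0 n B] by simp

lemma cnt_Npos[simp]: "cnt Npos n = n"
proof -
  have "Npos \<inter> {1..n} = {1..n}" by (auto simp: Npos_def)
  then show ?thesis by (simp add: cnt_def)
qed

lemma cnt_union: "B \<inter> C = {} \<Longrightarrow> cnt (B \<union> C) n = cnt B n + cnt C n"
proof -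
  assume "B \<inter> C = {}"
  then have "(B \<union> C) \<inter> {1..n} = (B \<inter> {1..n}) \<union> (C \<inter> {1..n})" "(B \<inter> {1..n}) \<inter> (C \<inter> {1..n}) = {}"
    by auto
  then show ?thesis unfolding cnt_def by (simp add: card_Un_disjoint)
qed

lemma cnt_compl: "C \<subseteq> Npos \<Longrightarrow> cnt (Npos - C) n = n - cnt C n"
proof -
  assume "C \<subseteq> Npos"
  then have "(Npos - C) \<inter> {1..n} = {1..n} - (C \<inter> {1..n})" "C \<inter> {1..n} \<subseteq> {1..n}"
    by (auto simp: Npos_def)
  then show ?thesis unfolding cnt_def by (simp add: card_Diff_subset finite_subset)
qed

lemma has_density_range: "has_density C d \<Longrightarrow> 0 \<le> d \<and> d \<le> 1"
proof -
  assume h: "has_density C d"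
  have "\<And>n. 0 \<le> real (cnt C n) / real n" by simp
  moreover have "\<And>n. real (cnt C n) / real n \<le> 1"
    using cnt_le by (simp add: divide_le_eq_1) presburger
  ultimately show ?thesis using h unfolding has_density_def
    by (meson LIMSEQ_le_const LIMSEQ_le_const2)
qed

lemma dens_eq: "has_density C d \<Longrightarrow> dens C = d"
  unfolding dens_def has_density_def by (rule limI)

lemma DD_dens: "C \<in> DD \<Longrightarrow> has_density C (dens C)"
  unfolding DD_def using dens_eq by blast

lemma DD_dens_range: "C \<in> DD \<Longrightarrow> 0 \<le> dens C \<and> dens C \<le> 1"
  using DD_dens has_density_range by blast

lemma has_density_empty: "has_density {} 0"
  unfolding has_density_def cnt_def by simp

lemma empty_DD: "{} \<in> DD" "dens {} = 0"
  using has_density_empty dens_eq unfolding DD_def Npos_def by auto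

lemma has_density_Npos: "has_density Npos 1"
proof -
  have "eventually (\<lambda>n. 1 = real (cnt Npos n) / real n) sequentially"
    by (rule eventually_sequentiallyI[of 1]) simp
  then show ?thesis unfolding has_density_def
    using tendsto_cong[of "\<lambda>n. 1" "\<lambda>n. real (cnt Npos n) / real n" sequentially 1] by simp
qed

lemma Npos_DD: "Npos \<in> DD" "dens Npos = 1"
  using has_density_Npos dens_eq unfolding DD_def by auto

lemma compl_DD: assumes "C \<in> DD" shows "Npos - C \<in> DD" "dens (Npos - C) = 1 - dens C"
proof -
  have sub: "C \<subseteq> Npos" using assms by (simp add: DD_def)
  have h: "((\<lambda>n. real (cnt C n) / real n) \<longlongrightarrow> dens C) sequentially"
    using DD_dens[OF assms] by (simp add: has_density_def)
  have ev: "eventually (\<lambda>n. 1 - real (cnt C n) / real n = real (cnt (Npos - C) n) / real n) sequentially"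
  proof (rule eventually_sequentiallyI[of 1])
    fix n :: nat assume "1 \<le> n"
    have "real (cnt (Npos - C) n) = real n - real (cnt C n)"
      using cnt_le[of C n] by (simp add: cnt_compl[OF sub] of_nat_diff)
    then show "1 - real (cnt C n) / real n = real (cnt (Npos - C) n) / real n"
      using \<open>1 \<le> n\<close> by (simp add: diff_divide_distrib)
  qed
  have lim: "((\<lambda>n. 1 - real (cnt C n) / real n) \<longlongrightarrow> 1 - dens C) sequentially"
    by (intro tendsto_intros h)
  have "has_density (Npos - C) (1 - dens C)"
    unfolding has_density_def using tendsto_cong[OF ev] lim by simp
  then show "Npos - C \<in> DD" "dens (Npos - C) = 1 - dens C"
    using dens_eq unfolding DD_def by auto
qed



lemma cluster_dm:
  fixes x :: "nat \<Rightarrow> nat set \<Rightarrow> real"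
  assumes range: "\<And>i B. x i B \<in> {0..1}"
    and npos: "\<And>i. x i Npos = 1"
    and add: "\<And>i B C. B \<subseteq> Npos \<Longrightarrow> C \<subseteq> Npos \<Longrightarrow> B \<inter> C = {} \<Longrightarrow> x i (B \<union> C) = x i B + x i C"
    and dd: "\<And>C \<eta>. C \<in> DD \<Longrightarrow> \<eta> > 0 \<Longrightarrow> eventually (\<lambda>i. x i C \<in> cball (dens C) \<eta>) sequentially"
    and aval: "\<And>\<eta>. \<eta> > 0 \<Longrightarrow> eventually (\<lambda>i. x i A \<in> {t - \<eta>..}) sequentially"
  shows "\<exists>z. density_measure z \<and> (\<forall>B. z B \<in> {0..1}) \<and> t \<le> z A"
proof -
  obtain z where z: "inf (nhds z) (filtermap x sequentially) \<noteq> bot"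
    using cluster_exists[of x] range by blast
  have coord: "continuous_on UNIV (\<lambda>f::nat set \<Rightarrow> real. f B)" for B by simp
  have zr: "z B \<in> {0..1}" for B
    by (rule cluster_closed[OF z coord, of "{0..1}"]) (use range in auto)
  have zn: "z Npos = 1"
    using cluster_closed[OF z coord, of "{1}" Npos] npos by simp
  have za: "z (B \<union> C) = z B + z C" if "B \<subseteq> Npos" "C \<subseteq> Npos" "B \<inter> C = {}" for B C
  proof -
    have "continuous_on UNIV (\<lambda>f::nat set \<Rightarrow> real. f (B \<union> C) - f B - f C)"
      by (intro continuous_intros) simp_all
    from cluster_closed[OF z this, of "{0}"] add[OF that] show ?thesis by simp
  qed
  have zd: "z C = dens C" if "C \<in> DD" for C
  proof -
    have "z C \<in> cball (dens C) \<eta>" if "\<eta> > 0" for \<eta>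
      by (rule cluster_closed[OF z coord]) (use dd[OF \<open>C \<in> DD\<close> that] in auto)
    then have "dist (z C) (dens C) \<le> \<eta>" if "\<eta> > 0" for \<eta>
      using that by (simp add: dist_commute)
    then show ?thesis by (meson dense_ge dist_le_zero_iff)
  qed
  have zA: "t - \<eta> \<le> z A" if "\<eta> > 0" for \<eta>
    using cluster_closed[OF z coord, of "{t - \<eta>..}" A] aval[OF that] by simp
  have "t \<le> z A"
    by (rule field_le_epsilon) (use zA in force)
  moreover have "density_measure z"
    unfolding density_measure_def using zr zn za zd by auto
  ultimately show ?thesis using zr by blast
qed



lemma unif_dens:
  assumes h: "has_density C d" and e: "\<epsilon> > 0"
  shows "\<exists>M. \<forall>m\<ge>M. \<forall>k\<le>m. \<bar>real (cnt C k) - d * real k\<bar> \<le> \<epsilon> * real m"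
proof -
  have "\<exists>N. \<forall>n\<ge>N. \<bar>real (cnt C n) / real n - d\<bar> < \<epsilon>"
    using h e unfolding has_density_def LIMSEQ_iff real_norm_def by blast
  then obtain N where N: "\<And>n. n \<ge> N \<Longrightarrow> \<bar>real (cnt C n) / real n - d\<bar> < \<epsilon>"
    by blast
  define N' where "N' = max N 1"
  define M where "M = max N' (nat \<lceil>real N' * (1 + \<bar>d\<bar>) / \<epsilon>\<rceil>)"
  have "\<bar>real (cnt C k) - d * real k\<bar> \<le> \<epsilon> * real m" if "m \<ge> M" "k \<le> m" for m k
  proof (cases "k \<ge> N'")
    case True
    then have kpos: "real k > 0" "k \<ge> N" by (auto simp: N'_def)
    have eq: "real (cnt C k) - d * real k = real k * (real (cnt C k) / real k - d)"
      using kpos by (simp add: right_diff_distrib)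
    have "\<bar>real (cnt C k) - d * real k\<bar> = real k * \<bar>real (cnt C k) / real k - d\<bar>"
      by (subst eq) (simp add: abs_mult)
    also have "\<dots> \<le> real k * \<epsilon>" using N[OF kpos(2)] kpos by simp
    also have "\<dots> \<le> real m * \<epsilon>" using that e by (intro mult_right_mono) simp_all
    finally show ?thesis by (simp add: mult.commute)
  next
    case False
    have "\<bar>real (cnt C k) - d * real k\<bar> \<le> real (cnt C k) + \<bar>d\<bar> * real k"
      using abs_triangle_ineq4[of "real (cnt C k)" "d * real k"] by (simp add: abs_mult)
    also have "\<dots> \<le> real k + \<bar>d\<bar> * real k" using cnt_le[of C k] by simp
    also have "\<dots> = real k * (1 + \<bar>d\<bar>)" by (simp add: algebra_simps)
    also have "\<dots> \<le> real N' * (1 + \<bar>d\<bar>)" using False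
      by (intro mult_right_mono) simp_all
    also have "\<dots> \<le> \<epsilon> * real m"
    proof -
      have "real N' * (1 + \<bar>d\<bar>) / \<epsilon> \<le> real (nat \<lceil>real N' * (1 + \<bar>d\<bar>) / \<epsilon>\<rceil>)"
        by (rule real_nat_ceiling_ge)
      also have "\<dots> \<le> real M" unfolding M_def by (rule of_nat_mono) simp
      also have "\<dots> \<le> real m" using that by simp
      finally have "real N' * (1 + \<bar>d\<bar>) / \<epsilon> \<le> real m" .
      then show ?thesis using e by (simp add: pos_divide_le_eq mult.commute)
    qed
    finally show ?thesis .
  qed
  then show ?thesis by (intro exI[of _ M]) auto
qed



lemma window_measure:
  assumes d: "\<delta> > 0"
    and W: "\<forall>N. \<exists>m k. N \<le> m \<and> k \<le> m \<and> \<delta> * real m \<le> real m - real k \<and>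
               l * (real m - real k) \<le> real (cnt A m) - real (cnt A k)"
  shows "\<exists>\<mu>. density_measure \<mu> \<and> (\<forall>B. \<mu> B \<in> {0..1}) \<and> l \<le> \<mu> A"
proof -
  from W obtain m k where mk: "\<And>N. N \<le> m N \<and> k N \<le> m N \<and> \<delta> * real (m N) \<le> real (m N) - real (k N) \<and>
               l * (real (m N) - real (k N)) \<le> real (cnt A (m N)) - real (cnt A (k N))"
    by metis
  define mm where "mm i = m (Suc i)" for i
  define kk where "kk i = k (Suc i)" for i
  have mm: "i \<le> mm i" "kk i \<le> mm i" "\<delta> * real (mm i) \<le> real (mm i) - real (kk i)"
       "l * (real (mm i) - real (kk i)) \<le> real (cnt A (mm i)) - real (cnt A (kk i))" for i
    using mk[of "Suc i"] by (auto simp: mm_def kk_def)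
  have dpos: "real (mm i) - real (kk i) > 0" for i
  proof -
    have "0 < \<delta> * real (mm i)" using mk[of "Suc i"] d by (simp add: mm_def)
    then show ?thesis using mm(3)[of i] by linarith
  qed
  define x where "x i B = (real (cnt B (mm i)) - real (cnt B (kk i))) / (real (mm i) - real (kk i))" for i B
  have range: "x i B \<in> {0..1}" for i B
  proof -
    have "cnt B (kk i) \<le> cnt B (mm i)" "cnt B (mm i) + kk i \<le> cnt B (kk i) + mm i"
      using cnt_le_add[OF mm(2)[of i]] by auto
    then have "0 \<le> real (cnt B (mm i)) - real (cnt B (kk i))"
      "real (cnt B (mm i)) - real (cnt B (kk i)) \<le> real (mm i) - real (kk i)"
      by (simp_all add: of_nat_add[symmetric] del: of_nat_add)
    then show ?thesis using dpos[of i] by (simp add: x_def divide_le_eq_1)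
  qed
  have npos: "x i Npos = 1" for i using dpos[of i] by (simp add: x_def)
  have add: "x i (B \<union> C) = x i B + x i C" if "B \<inter> C = {}" for i B C
    using that by (simp add: x_def cnt_union add_divide_distrib[symmetric])
  have dd: "eventually (\<lambda>i. x i C \<in> cball (dens C) \<eta>) sequentially" if C: "C \<in> DD" and eta: "\<eta> > 0" for C \<eta>
  proof -
    define D where "D = dens C"
    have hC: "has_density C D" using DD_dens[OF C] by (simp add: D_def)
    have "\<eta> * \<delta> / 2 > 0" using eta d by simp
    from unif_dens[OF hC this] obtain M where
      M: "\<And>m k. m \<ge> M \<Longrightarrow> k \<le> m \<Longrightarrow> \<bar>real (cnt C k) - D * real k\<bar> \<le> \<eta> * \<delta> / 2 * real m" by blast
    show ?thesis
    proof (rule eventually_sequentiallyI[of M])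
      fix i assume "M \<le> i"
      then have "M \<le> mm i" using mm(1)[of i] by linarith
      let ?m = "real (mm i)" and ?k = "real (kk i)"
      have e1: "\<bar>real (cnt C (mm i)) - D * ?m\<bar> \<le> \<eta> * \<delta> / 2 * ?m"
        using M[OF \<open>M \<le> mm i\<close>] by simp
      have e2: "\<bar>real (cnt C (kk i)) - D * ?k\<bar> \<le> \<eta> * \<delta> / 2 * ?m"
        using M[OF \<open>M \<le> mm i\<close> mm(2)] by simp
      have "\<bar>(real (cnt C (mm i)) - real (cnt C (kk i))) - D * (?m - ?k)\<bar> \<le> \<eta> * \<delta> * ?m"
      proof -
        have eqn: "(real (cnt C (mm i)) - real (cnt C (kk i))) - D * (?m - ?k)
            = (real (cnt C (mm i)) - D * ?m) - (real (cnt C (kk i)) - D * ?k)"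
          by (simp add: algebra_simps)
        have half: "\<eta> * \<delta> / 2 * ?m + \<eta> * \<delta> / 2 * ?m = \<eta> * \<delta> * ?m" by simp
        show ?thesis unfolding eqn
          using e1 e2 half abs_triangle_ineq4[of "real (cnt C (mm i)) - D * ?m" "real (cnt C (kk i)) - D * ?k"]
          by linarith
      qed
      also have "\<dots> \<le> \<eta> * (?m - ?k)" using mm(3)[of i] eta by (simp add: mult.assoc)
      finally have "\<bar>(real (cnt C (mm i)) - real (cnt C (kk i))) - D * (?m - ?k)\<bar> \<le> \<eta> * (?m - ?k)" .
      then have "\<bar>x i C - D\<bar> \<le> \<eta>"
        using dpos[of i] by (simp add: x_def abs_le_iff field_simps)
      then show "x i C \<in> cball (dens C) \<eta>" by (simp add: D_def dist_real_def abs_minus_commute)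
    qed
  qed
  have aval: "eventually (\<lambda>i. x i A \<in> {l - \<eta>..}) sequentially" if "\<eta> > 0" for \<eta>
  proof (rule always_eventually, rule allI)
    fix i
    have "l \<le> x i A" using mm(4)[of i] dpos[of i] by (simp add: x_def le_divide_eq)
    then show "x i A \<in> {l - \<eta>..}" using that by simp
  qed
  show ?thesis by (rule cluster_dm[OF range npos add dd aval]) auto
qed



fun grd :: "nat set \<Rightarrow> real \<Rightarrow> nat \<Rightarrow> nat" where
  "grd A l 0 = 0"
| "grd A l (Suc n) = (if Suc n \<in> A \<or> real (grd A l n) < l * real (Suc n) then Suc (grd A l n) else grd A l n)"

lemma greedy:
  assumes A: "A \<subseteq> Npos" and l0: "0 \<le> l" and l1: "l \<le> 1"
    and H: "\<forall>\<delta>>0. \<exists>N. \<forall>m k. N \<le> m \<longrightarrow> k \<le> m \<longrightarrow> \<delta> * real m \<le> real m - real k \<longrightarrow>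
              real (cnt A m) - real (cnt A k) < l * (real m - real k)"
  shows "\<exists>C\<in>DD. A \<subseteq> C \<and> dens C = l"
proof -
  let ?g = "grd A l"
  define C where "C = {n. 1 \<le> n \<and> ?g n = Suc (?g (n - 1))}"
  have cntC: "cnt C n = ?g n" for n
  proof (induction n)
    case (Suc n)
    have "Suc n \<in> C \<longleftrightarrow> ?g (Suc n) = Suc (?g n)" by (simp add: C_def)
    then show ?case using Suc by (auto simp: cnt_Suc)
  qed simp
  have CN: "C \<subseteq> Npos" by (auto simp: C_def Npos_def)
  have AC: "A \<subseteq> C"
  proof
    fix n assume "n \<in> A"
    then have "n \<ge> 1" using A by (auto simp: Npos_def)
    then obtain p where "n = Suc p" by (cases n) auto
    then show "n \<in> C" using \<open>n \<in> A\<close> by (simp add: C_def)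
  qed
  have low: "l * real n - 1 \<le> real (?g n)" for n
  proof (induction n)
    case (Suc n) then show ?case using l1 by (auto simp: algebra_simps)
  qed simp
  have inv: "\<exists>k\<le>n. real (?g k) \<le> l * real k + 1 \<and> ?g n + cnt A k \<le> ?g k + cnt A n" for n
  proof (induction n)
    case 0 then show ?case by simp
  next
    case (Suc n)
    then obtain k where k: "k \<le> n" "real (?g k) \<le> l * real k + 1" "?g n + cnt A k \<le> ?g k + cnt A n" by blast
    show ?case
    proof (cases "real (?g n) < l * real (Suc n)")
      case True
      then have "real (?g (Suc n)) \<le> l * real (Suc n) + 1" by simp
      then show ?thesis by (intro exI[of _ "Suc n"]) simp
    next
      case False
      then have "?g (Suc n) + cnt A k \<le> ?g k + cnt A (Suc n)"
        using k(3) by (auto simp: cnt_Suc)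
      then show ?thesis using k by (intro exI[of _ k]) simp
    qed
  qed
  have up: "\<exists>N. \<forall>n\<ge>N. real (?g n) \<le> l * real n + 1 + \<delta> * real n" if d: "\<delta> > 0" for \<delta>
  proof -
    from H d obtain N where N: "\<And>m k. N \<le> m \<Longrightarrow> k \<le> m \<Longrightarrow> \<delta> * real m \<le> real m - real k \<Longrightarrow>
              real (cnt A m) - real (cnt A k) < l * (real m - real k)" by blast
    have "real (?g n) \<le> l * real n + 1 + \<delta> * real n" if "n \<ge> N" for n
    proof -
      obtain k where k: "k \<le> n" "real (?g k) \<le> l * real k + 1" "?g n + cnt A k \<le> ?g k + cnt A n"
        using inv by blast
      have gk: "real (?g n) \<le> real (?g k) + real (cnt A n) - real (cnt A k)"
        using k(3) by (simp add: of_nat_add[symmetric] del: of_nat_add)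
      have "real (cnt A n) - real (cnt A k) \<le> l * (real n - real k) + \<delta> * real n"
      proof (cases "\<delta> * real n \<le> real n - real k")
        case True
        from N[OF that k(1) True] d show ?thesis by (smt (verit) mult_nonneg_nonneg of_nat_0_le_iff)
      next
        case False
        have "cnt A n + k \<le> cnt A k + n" using cnt_le_add[OF k(1)] by simp
        then have "real (cnt A n) + real k \<le> real (cnt A k) + real n"
          by (simp add: of_nat_add[symmetric] del: of_nat_add)
        then have "real (cnt A n) - real (cnt A k) \<le> real n - real k" by linarith
        moreover have "0 \<le> l * (real n - real k)" using l0 k(1) by simp
        ultimately show ?thesis using False by linarith
      qed
      then show ?thesis using gk k(2) by (simp add: algebra_simps)
    qed
    then show ?thesis by blast
  qed
  have hd: "has_density C l"
    unfolding has_density_def LIMSEQ_iff real_norm_def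
  proof (intro allI impI)
    fix r :: real assume r: "r > 0"
    from up[of "r/2"] r obtain N where N: "\<And>n. n \<ge> N \<Longrightarrow> real (?g n) \<le> l * real n + 1 + r/2 * real n" by auto
    define M where "M = max N (nat \<lceil>2 / r\<rceil> + 1)"
    have "\<bar>real (cnt C n) / real n - l\<bar> < r" if "n \<ge> M" for n
    proof -
      have n: "n \<ge> N" "real n > 2 / r" using that unfolding M_def by linarith+
      then have np: "real n > 0" using r by (smt (verit) divide_pos_pos)
      have "1 / real n < r / 2" using n(2) r np by (simp add: field_simps)
      moreover have "real (?g n) / real n \<le> l + 1 / real n + r/2"
        using N[OF n(1)] np by (simp add: field_simps)
      moreover have "l - 1 / real n \<le> real (?g n) / real n"
      proof -
        have "(l * real n - 1) / real n \<le> real (?g n) / real n"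
          using low[of n] np by (intro divide_right_mono) simp_all
        moreover have "(l * real n - 1) / real n = l - 1 / real n"
          using np by (simp add: diff_divide_distrib)
        ultimately show ?thesis by simp
      qed
      ultimately show ?thesis using r by (simp add: cntC abs_less_iff)
    qed
    then show "\<exists>no. \<forall>n\<ge>no. \<bar>real (cnt C n) / real n - l\<bar> < r" by blast
  qed
  have "C \<in> DD" using CN hd by (auto simp: DD_def)
  then show ?thesis using AC dens_eq[OF hd] by blast
qed



lemma upper_bdd: "bdd_below {dens C | C. A \<subseteq> C \<and> C \<in> DD}"
  using DD_dens_range by (auto intro!: bdd_belowI[of _ 0])

lemma lower_bdd: "bdd_above {dens B | B. B \<subseteq> A \<and> B \<in> DD}"
  using DD_dens_range by (auto intro!: bdd_aboveI[of _ 1])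

lemma upper_le: "A \<subseteq> C \<Longrightarrow> C \<in> DD \<Longrightarrow> upper_dd A \<le> dens C"
  unfolding upper_dd_def by (rule cInf_lower[OF _ upper_bdd]) auto

lemma lower_ge: "B \<subseteq> A \<Longrightarrow> B \<in> DD \<Longrightarrow> dens B \<le> lower_dd A"
  unfolding lower_dd_def by (rule cSup_upper[OF _ lower_bdd]) auto

lemma upper_le1: "A \<subseteq> Npos \<Longrightarrow> upper_dd A \<le> 1"
  using upper_le[of A Npos] Npos_DD by simp

lemma forward:
  assumes dm: "density_measure \<mu>" and A: "A \<subseteq> Npos"
  shows "lower_dd A \<le> \<mu> A \<and> \<mu> A \<le> upper_dd A"
proof
  have split: "\<mu> Y = \<mu> X + \<mu> (Y - X)" if "X \<subseteq> Y" "Y \<subseteq> Npos" for X Y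
  proof -
    have "Y = X \<union> (Y - X)" using that by auto
    then show ?thesis using dm that unfolding density_measure_def
      by (metis Diff_disjoint Diff_subset order_trans)
  qed
  have nn: "0 \<le> \<mu> X" if "X \<subseteq> Npos" for X using dm that unfolding density_measure_def by blast
  show "lower_dd A \<le> \<mu> A"
    unfolding lower_dd_def
  proof (rule cSup_least)
    show "{dens B |B. B \<subseteq> A \<and> B \<in> DD} \<noteq> {}" using empty_DD by auto
  next
    fix v assume "v \<in> {dens B |B. B \<subseteq> A \<and> B \<in> DD}"
    then obtain B where B: "B \<subseteq> A" "B \<in> DD" "v = dens B" by auto
    have "\<mu> B = dens B" using dm B(2) unfolding density_measure_def by blast
    then show "v \<le> \<mu> A" using split[OF B(1) A] nn[of "A - B"] A B(3) by auto
  qed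
  show "\<mu> A \<le> upper_dd A"
    unfolding upper_dd_def
  proof (rule cInf_greatest)
    show "{dens C |C. A \<subseteq> C \<and> C \<in> DD} \<noteq> {}" using Npos_DD A by auto
  next
    fix v assume "v \<in> {dens C |C. A \<subseteq> C \<and> C \<in> DD}"
    then obtain C where C: "A \<subseteq> C" "C \<in> DD" "v = dens C" by auto
    have CN: "C \<subseteq> Npos" using C(2) by (simp add: DD_def)
    have "\<mu> C = dens C" using dm C(2) unfolding density_measure_def by blast
    moreover have "C - A \<subseteq> Npos" using CN by auto
    ultimately show "\<mu> A \<le> v" using split[OF C(1) CN] nn[of "C - A"] C(3) by linarith
  qed
qed

lemma windows_exist:
  assumes A: "A \<subseteq> Npos" and l: "l < upper_dd A"
  shows "\<exists>\<delta>>0. \<forall>N. \<exists>m k. N \<le> m \<and> k \<le> m \<and> \<delta> * real m \<le> real m - real k \<and>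
               l * (real m - real k) \<le> real (cnt A m) - real (cnt A k)"
proof (cases "l < 0")
  case True
  show ?thesis
  proof (intro exI[of _ "1::real"] conjI allI)
    fix N :: nat
    have "l * real N \<le> 0" using True by (simp add: mult_nonpos_nonneg)
    then show "\<exists>m k. N \<le> m \<and> k \<le> m \<and> 1 * real m \<le> real m - real k \<and>
               l * (real m - real k) \<le> real (cnt A m) - real (cnt A k)"
      by (intro exI[of _ N] exI[of _ 0]) auto
  qed simp
next
  case False
  show ?thesis
  proof (rule ccontr)
    assume neg: "\<not> ?thesis"
    have H: "\<forall>\<delta>>0. \<exists>N. \<forall>m k. N \<le> m \<longrightarrow> k \<le> m \<longrightarrow> \<delta> * real m \<le> real m - real k \<longrightarrow>
              real (cnt A m) - real (cnt A k) < l * (real m - real k)"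
    proof (intro allI impI)
      fix \<delta> :: real assume "\<delta> > 0"
      with neg obtain N where N: "\<not> (\<exists>m k. N \<le> m \<and> k \<le> m \<and> \<delta> * real m \<le> real m - real k \<and>
               l * (real m - real k) \<le> real (cnt A m) - real (cnt A k))" by blast
      show "\<exists>N. \<forall>m k. N \<le> m \<longrightarrow> k \<le> m \<longrightarrow> \<delta> * real m \<le> real m - real k \<longrightarrow>
              real (cnt A m) - real (cnt A k) < l * (real m - real k)"
        by (intro exI[of _ N] allI impI) (meson N not_le)
    qed
    have "l \<le> 1" using l upper_le1[OF A] by simp
    from greedy[OF A _ this H] False obtain C where "C \<in> DD" "A \<subseteq> C" "dens C = l" by auto
    then have "upper_dd A \<le> l" using upper_le by metis
    then show False using l by simp
  qed
qed

lemma upper_attained: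
  assumes A: "A \<subseteq> Npos"
  shows "\<exists>\<mu>. density_measure \<mu> \<and> (\<forall>B. \<mu> B \<in> {0..1}) \<and> upper_dd A \<le> \<mu> A"
proof -
  have "\<exists>\<mu>. density_measure \<mu> \<and> (\<forall>B. \<mu> B \<in> {0..1}) \<and> upper_dd A - 1 / real (Suc j) \<le> \<mu> A" for j
  proof -
    have "upper_dd A - 1 / real (Suc j) < upper_dd A" by simp
    from windows_exist[OF A this] obtain \<delta> where "\<delta> > 0" and
      "\<forall>N. \<exists>m k. N \<le> m \<and> k \<le> m \<and> \<delta> * real m \<le> real m - real k \<and>
               (upper_dd A - 1 / real (Suc j)) * (real m - real k) \<le> real (cnt A m) - real (cnt A k)"
      by blast
    from window_measure[OF this] show ?thesis .
  qed
  then obtain \<mu> where \<mu>: "\<And>j. density_measure (\<mu> j) \<and> (\<forall>B. \<mu> j B \<in> {0..1}) \<and> upper_dd A - 1 / real (Suc j) \<le> \<mu> j A"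
    by metis
  show ?thesis
  proof (rule cluster_dm[of \<mu>])
    show "\<mu> i B \<in> {0..1}" for i B using \<mu> by blast
    show "\<mu> i Npos = 1" for i using \<mu>[of i] unfolding density_measure_def by blast
    show "\<mu> i (B \<union> C) = \<mu> i B + \<mu> i C" if "B \<subseteq> Npos" "C \<subseteq> Npos" "B \<inter> C = {}" for i B C
      using \<mu>[of i] that unfolding density_measure_def by blast
    show "eventually (\<lambda>i. \<mu> i C \<in> cball (dens C) \<eta>) sequentially" if "C \<in> DD" "\<eta> > 0" for C \<eta>
      using \<mu> that unfolding density_measure_def by (intro always_eventually) auto
    show "eventually (\<lambda>i. \<mu> i A \<in> {upper_dd A - \<eta>..}) sequentially" if eta: "\<eta> > 0" for \<eta>
    proof (rule eventually_sequentiallyI[of "nat \<lceil>1 / \<eta>\<rceil>"])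
      fix j assume "nat \<lceil>1 / \<eta>\<rceil> \<le> j"
      then have "1 / \<eta> \<le> real j" by linarith
      then have "1 / real (Suc j) \<le> \<eta>" using eta by (simp add: field_simps)
      then show "\<mu> j A \<in> {upper_dd A - \<eta>..}" using \<mu>[of j] by simp
    qed
  qed
qed

lemma compl_bound:
  assumes A: "A \<subseteq> Npos"
  shows "1 - upper_dd (Npos - A) \<le> lower_dd A"
proof -
  have "1 - lower_dd A \<le> upper_dd (Npos - A)"
    unfolding upper_dd_def
  proof (rule cInf_greatest)
    show "{dens C |C. Npos - A \<subseteq> C \<and> C \<in> DD} \<noteq> {}" using Npos_DD by auto
  next
    fix v assume "v \<in> {dens C |C. Npos - A \<subseteq> C \<and> C \<in> DD}"
    then obtain C where C: "Npos - A \<subseteq> C" "C \<in> DD" "v = dens C" by auto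
    have "Npos - C \<subseteq> A" using C(1) by auto
    from lower_ge[OF this compl_DD(1)[OF C(2)]] compl_DD(2)[OF C(2)]
    show "1 - lower_dd A \<le> v" using C(3) by simp
  qed
  then show ?thesis by simp
qed

lemma lower_attained:
  assumes A: "A \<subseteq> Npos"
  shows "\<exists>\<mu>. density_measure \<mu> \<and> \<mu> A = lower_dd A"
proof -
  obtain \<mu> where \<mu>: "density_measure \<mu>" "upper_dd (Npos - A) \<le> \<mu> (Npos - A)"
    using upper_attained[of "Npos - A"] by auto
  have "\<mu> Npos = \<mu> A + \<mu> (Npos - A)"
  proof -
    have "Npos = A \<union> (Npos - A)" using A by auto
    then show ?thesis using \<mu>(1) A unfolding density_measure_def by (metis Diff_disjoint Diff_subset)
  qed
  then have "\<mu> A \<le> lower_dd A" using \<mu> compl_bound[OF A] unfolding density_measure_def by linarith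
  then show ?thesis using forward[OF \<mu>(1) A] \<mu>(1) by (metis order_antisym)
qed

lemma convex_dm:
  assumes m1: "density_measure \<mu>1" and m2: "density_measure \<mu>2" and t: "0 \<le> t" "t \<le> 1"
  shows "density_measure (\<lambda>B. t * \<mu>1 B + (1 - t) * \<mu>2 B)"
  unfolding density_measure_def
proof (intro conjI allI impI ballI)
  fix A assume A: "A \<subseteq> Npos"
  then have r: "0 \<le> \<mu>1 A" "\<mu>1 A \<le> 1" "0 \<le> \<mu>2 A" "\<mu>2 A \<le> 1"
    using m1 m2 unfolding density_measure_def by auto
  show "0 \<le> t * \<mu>1 A + (1 - t) * \<mu>2 A" using r t by simp
  have "t * \<mu>1 A \<le> t" "(1 - t) * \<mu>2 A \<le> 1 - t"
    using r t by (simp_all add: mult_left_le)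
  then show "t * \<mu>1 A + (1 - t) * \<mu>2 A \<le> 1" by simp
next
  show "t * \<mu>1 Npos + (1 - t) * \<mu>2 Npos = 1" using m1 m2 unfolding density_measure_def by simp
next
  fix A B assume "A \<subseteq> Npos" "B \<subseteq> Npos" "A \<inter> B = {}"
  then show "t * \<mu>1 (A \<union> B) + (1 - t) * \<mu>2 (A \<union> B) =
        t * \<mu>1 A + (1 - t) * \<mu>2 A + (t * \<mu>1 B + (1 - t) * \<mu>2 B)"
    using m1 m2 unfolding density_measure_def by (simp add: algebra_simps)
next
  fix A assume "A \<in> DD"
  then show "t * \<mu>1 A + (1 - t) * \<mu>2 A = dens A"
    using m1 m2 unfolding density_measure_def by (simp add: algebra_simps)
qed

theorem corollary3p3:
  fixes A :: "nat set" and x :: real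
  assumes "A \<subseteq> Npos"
  shows "(\<exists>\<mu>. density_measure \<mu> \<and> \<mu> A = x) \<longleftrightarrow> x \<in> {lower_dd A .. upper_dd A}"
proof
  assume "\<exists>\<mu>. density_measure \<mu> \<and> \<mu> A = x"
  then show "x \<in> {lower_dd A .. upper_dd A}" using forward[OF _ assms] by auto
next
  assume x: "x \<in> {lower_dd A .. upper_dd A}"
  obtain \<mu>1 where m1: "density_measure \<mu>1" "\<mu>1 A = upper_dd A"
    using upper_attained[OF assms] forward[OF _ assms] by (metis order_antisym)
  obtain \<mu>2 where m2: "density_measure \<mu>2" "\<mu>2 A = lower_dd A"
    using lower_attained[OF assms] by blast
  show "\<exists>\<mu>. density_measure \<mu> \<and> \<mu> A = x"
  proof (cases "upper_dd A = lower_dd A")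
    case True
    then show ?thesis using x m1 by (intro exI[of _ \<mu>1]) auto
  next
    case False
    define t where "t = (x - lower_dd A) / (upper_dd A - lower_dd A)"
    have lt: "lower_dd A < upper_dd A" using x False by auto
    have t: "0 \<le> t" "t \<le> 1" using x lt by (auto simp: t_def divide_le_eq_1)
    have tt: "t * (upper_dd A - lower_dd A) = x - lower_dd A"
      using lt by (simp add: t_def)
    have "t * upper_dd A + (1 - t) * lower_dd A = lower_dd A + t * (upper_dd A - lower_dd A)"
      by (simp add: algebra_simps)
    then have "t * upper_dd A + (1 - t) * lower_dd A = x" using tt by simp
    then show ?thesis
      using convex_dm[OF m1(1) m2(1) t] m1(2) m2(2) by (intro exI[of _ "\<lambda>B. t * \<mu>1 B + (1 - t) * \<mu>2 B"]) auto
  qed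
qed

end
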